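(* Let $(M,\Delta,S,\varepsilon)$ be a weak Kac algebra with source Cartan subalgebra $N_s$, and write $e=\Delta(1)$. Suppose $N_s\cong\bigoplus_{\alpha=1}^K M_{n_\alpha}(\mathbb{C})$ and let $\{f^\alpha_{pq}\}_{p,q=1,\dots,n_\alpha}^{\alpha=1,\dots,K}$ be a system of matrix units in $N_s$. Then $$e=\sum_\alpha\frac{1}{n_\alpha}\sum_{p,q}f^\alpha_{pq}\otimes S(f^\alpha_{qp}).$$
   Context: All algebras are finite-dimensional over $\mathbb{C}$; $\varsigma$ denotes the flip and $\mu(x\otimes y)=xy$. A weak Kac algebra is a quadruple $(M,\Delta,S,\varepsilon)$ where $M$ is a finite-dimensional $C^*$-algebra; $\Delta:M\to M\otimes M$ is an injective, not necessarily unital, $*$-homomorphism with $(\Delta\otimes\mathrm{id})\Delta=(\mathrm{id}\otimes\Delta)\Delta$; $S:M\to M$ is a linear, unital, antimultiplicative, $*$-preserving bijection with $S^2=\mathrm{id}$ and $(S\otimes S)\circ\Delta=\varsigma\circ\Delta\circ S$; and $\varepsilon:M\to\mathbb{C}$ is linear with $(\varepsilon\otimes\mathrm{id})\Delta=(\mathrm{id}\otimes\varepsilon)\Delta=\mathrm{id}$, $\varepsilon\circ S=\varepsilon$, $\varepsilon(x^* )=\overline{\varepsilon(x)}$, $(\varepsilon\otimes\varepsilon)((x\otimes1)e(1\otimes y))=\varepsilon(xy)$ for all $x,y$, where $e:=\Delta(1)$, and $(\varepsilon_s\otimes\mathrm{id})\Delta(x)=(1\otimes x)e$ for all $x$, where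 $\varepsilon_s:=\mu(S\otimes\mathrm{id})\Delta$. The source Cartan subalgebra is $N_s=\{x\in M:\Delta(x)=e(1\otimes x)=(1\otimes x)e\}$ (a $C^*$-subalgebra of $M$). A system of matrix units $\{f^\alpha_{pq}\}$ means $f^\alpha_{pq}f^\beta_{rs}=\delta_{\alpha\beta}\delta_{qr}f^\alpha_{ps}$, $(f^\alpha_{pq})^*=f^\alpha_{qp}$, $\sum_{\alpha,p}f^\alpha_{pp}=1$, spanning $N_s$. *)

theory Defs
  imports Complex_Main "HOL-Library.Function_Algebras"
begin

text \<open>A finite-dimensional complex vector space is represented as
  'i \<Rightarrow> complex for a finite index type 'i (a basis of M); the algebraic tensor
  product M \<otimes> M is ('i \<times> 'i) \<Rightarrow> complex, with x \<otimes> y given by tens x y.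
  Linear maps on tensor products are the linear extensions of their values on
  elementary tensors of basis vectors.\<close>

definition sc :: "complex \<Rightarrow> ('a \<Rightarrow> complex) \<Rightarrow> ('a \<Rightarrow> complex)" where
  "sc a x = (\<lambda>k. a * x k)"

definition bv :: "'a \<Rightarrow> ('a \<Rightarrow> complex)" where
  "bv i = (\<lambda>k. if k = i then 1 else 0)"

definition clin :: "(('a \<Rightarrow> complex) \<Rightarrow> ('b \<Rightarrow> complex)) \<Rightarrow> bool" where
  "clin F \<longleftrightarrow> (\<forall>x y. F (x + y) = F x + F y) \<and> (\<forall>a x. F (sc a x) = sc a (F x))"

definition antilin :: "(('a \<Rightarrow> complex) \<Rightarrow> ('b \<Rightarrow> complex)) \<Rightarrow> bool" where
  "antilin F \<longleftrightarrow> (\<forall>x y. F (x + y) = F x + F y) \<and> (\<forall>a x. F (sc a x) = sc (cnj a) (F x))"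

definition lfunctional :: "(('a \<Rightarrow> complex) \<Rightarrow> complex) \<Rightarrow> bool" where
  "lfunctional \<phi> \<longleftrightarrow> (\<forall>x y. \<phi> (x + y) = \<phi> x + \<phi> y) \<and> (\<forall>a x. \<phi> (sc a x) = a * \<phi> x)"

definition tens :: "('a \<Rightarrow> complex) \<Rightarrow> ('b \<Rightarrow> complex) \<Rightarrow> ('a \<times> 'b \<Rightarrow> complex)" where
  "tens x y = (\<lambda>(i, j). x i * y j)"

definition tmap :: "(('a \<Rightarrow> complex) \<Rightarrow> ('c \<Rightarrow> complex)) \<Rightarrow> (('b \<Rightarrow> complex) \<Rightarrow> ('d \<Rightarrow> complex))
    \<Rightarrow> ('a::finite \<times> 'b::finite \<Rightarrow> complex) \<Rightarrow> ('c \<times> 'd \<Rightarrow> complex)" where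
  "tmap F G z = (\<Sum>ij\<in>UNIV. sc (z ij) (tens (F (bv (fst ij))) (G (bv (snd ij)))))"

definition tmult :: "(('a \<Rightarrow> complex) \<Rightarrow> ('a \<Rightarrow> complex) \<Rightarrow> ('a \<Rightarrow> complex))
    \<Rightarrow> ('a::finite \<times> 'a \<Rightarrow> complex) \<Rightarrow> ('a \<times> 'a \<Rightarrow> complex) \<Rightarrow> ('a \<times> 'a \<Rightarrow> complex)" where
  "tmult mult z w = (\<Sum>ij\<in>UNIV. \<Sum>kl\<in>UNIV. sc (z ij * w kl)
      (tens (mult (bv (fst ij)) (bv (fst kl))) (mult (bv (snd ij)) (bv (snd kl)))))"

definition tstar :: "(('a \<Rightarrow> complex) \<Rightarrow> ('a \<Rightarrow> complex))
    \<Rightarrow> ('a::finite \<times> 'a \<Rightarrow> complex) \<Rightarrow> ('a \<times> 'a \<Rightarrow> complex)" where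
  "tstar star z = (\<Sum>ij\<in>UNIV. sc (cnj (z ij)) (tens (star (bv (fst ij))) (star (bv (snd ij)))))"

definition flip :: "('a \<times> 'b \<Rightarrow> complex) \<Rightarrow> ('b \<times> 'a \<Rightarrow> complex)" where
  "flip z = (\<lambda>(i, j). z (j, i))"

definition reassoc :: "(('a \<times> 'b) \<times> 'c \<Rightarrow> complex) \<Rightarrow> ('a \<times> ('b \<times> 'c) \<Rightarrow> complex)" where
  "reassoc z = (\<lambda>(i, (j, k)). z ((i, j), k))"

text \<open>(\<phi> \<otimes> id) and (id \<otimes> \<phi>) for a functional \<phi>, using \<complex> \<otimes> M = M = M \<otimes> \<complex>\<close>
definition lslice :: "(('a \<Rightarrow> complex) \<Rightarrow> complex) \<Rightarrow> ('a::finite \<times> 'b::finite \<Rightarrow> complex) \<Rightarrow> ('b \<Rightarrow> complex)" where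
  "lslice \<phi> z = (\<Sum>ij\<in>UNIV. sc (z ij * \<phi> (bv (fst ij))) (bv (snd ij)))"

definition rslice :: "(('b \<Rightarrow> complex) \<Rightarrow> complex) \<Rightarrow> ('a::finite \<times> 'b::finite \<Rightarrow> complex) \<Rightarrow> ('a \<Rightarrow> complex)" where
  "rslice \<phi> z = (\<Sum>ij\<in>UNIV. sc (z ij * \<phi> (bv (snd ij))) (bv (fst ij)))"

definition tfunc :: "(('a \<Rightarrow> complex) \<Rightarrow> complex) \<Rightarrow> (('b \<Rightarrow> complex) \<Rightarrow> complex)
    \<Rightarrow> ('a::finite \<times> 'b::finite \<Rightarrow> complex) \<Rightarrow> complex" where
  "tfunc \<phi> \<psi> z = (\<Sum>ij\<in>UNIV. z ij * \<phi> (bv (fst ij)) * \<psi> (bv (snd ij)))"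

definition tmu :: "(('a \<Rightarrow> complex) \<Rightarrow> ('a \<Rightarrow> complex) \<Rightarrow> ('a \<Rightarrow> complex))
    \<Rightarrow> ('a::finite \<times> 'a \<Rightarrow> complex) \<Rightarrow> ('a \<Rightarrow> complex)" where
  "tmu mult z = (\<Sum>ij\<in>UNIV. sc (z ij) (mult (bv (fst ij)) (bv (snd ij))))"

text \<open>Finite-dimensional C*-algebra: unital associative complex *-algebra admitting
  a C*-norm (completeness is automatic in finite dimension).\<close>
definition fd_cstar_algebra :: "(('i::finite \<Rightarrow> complex) \<Rightarrow> ('i \<Rightarrow> complex) \<Rightarrow> ('i \<Rightarrow> complex))
    \<Rightarrow> (('i \<Rightarrow> complex) \<Rightarrow> ('i \<Rightarrow> complex)) \<Rightarrow> ('i \<Rightarrow> complex) \<Rightarrow> bool" where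
  "fd_cstar_algebra mult star one \<longleftrightarrow>
     (\<forall>x. clin (mult x)) \<and> (\<forall>y. clin (\<lambda>x. mult x y)) \<and>
     (\<forall>x y z. mult (mult x y) z = mult x (mult y z)) \<and>
     (\<forall>x. mult one x = x \<and> mult x one = x) \<and>
     antilin star \<and> (\<forall>x. star (star x) = x) \<and>
     (\<forall>x y. star (mult x y) = mult (star y) (star x)) \<and>
     (\<exists>N :: ('i \<Rightarrow> complex) \<Rightarrow> real.
        (\<forall>x. N x = 0 \<longleftrightarrow> x = 0) \<and>
        (\<forall>x y. N (x + y) \<le> N x + N y) \<and>
        (\<forall>a x. N (sc a x) = cmod a * N x) \<and>
        (\<forall>x y. N (mult x y) \<le> N x * N y) \<and>
        (\<forall>x. N (mult (star x) x) = (N x)\<^sup>2))"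

definition weak_kac_algebra :: "(('i::finite \<Rightarrow> complex) \<Rightarrow> ('i \<Rightarrow> complex) \<Rightarrow> ('i \<Rightarrow> complex))
    \<Rightarrow> (('i \<Rightarrow> complex) \<Rightarrow> ('i \<Rightarrow> complex)) \<Rightarrow> ('i \<Rightarrow> complex)
    \<Rightarrow> (('i \<Rightarrow> complex) \<Rightarrow> ('i \<times> 'i \<Rightarrow> complex))
    \<Rightarrow> (('i \<Rightarrow> complex) \<Rightarrow> ('i \<Rightarrow> complex))
    \<Rightarrow> (('i \<Rightarrow> complex) \<Rightarrow> complex) \<Rightarrow> bool" where
  "weak_kac_algebra mult star one \<Delta> S \<epsilon> \<longleftrightarrow>
     fd_cstar_algebra mult star one \<and>
     \<comment> \<open>\<Delta>: injective, not necessarily unital *-homomorphism, coassociative\<close>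
     clin \<Delta> \<and> inj \<Delta> \<and>
     (\<forall>x y. \<Delta> (mult x y) = tmult mult (\<Delta> x) (\<Delta> y)) \<and>
     (\<forall>x. \<Delta> (star x) = tstar star (\<Delta> x)) \<and>
     (\<forall>x. reassoc (tmap \<Delta> id (\<Delta> x)) = tmap id \<Delta> (\<Delta> x)) \<and>
     \<comment> \<open>antipode\<close>
     clin S \<and> bij S \<and> S one = one \<and>
     (\<forall>x y. S (mult x y) = mult (S y) (S x)) \<and>
     (\<forall>x. S (star x) = star (S x)) \<and>
     (\<forall>x. S (S x) = x) \<and>
     (\<forall>x. tmap S S (\<Delta> x) = flip (\<Delta> (S x))) \<and>
     \<comment> \<open>counit\<close>
     lfunctional \<epsilon> \<and>
     (\<forall>x. lslice \<epsilon> (\<Delta> x) = x) \<and> (\<forall>x. rslice \<epsilon> (\<Delta> x) = x) \<and>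
     (\<forall>x. \<epsilon> (S x) = \<epsilon> x) \<and>
     (\<forall>x. \<epsilon> (star x) = cnj (\<epsilon> x)) \<and>
     (\<forall>x y. tfunc \<epsilon> \<epsilon> (tmult mult (tmult mult (tens x one) (\<Delta> one)) (tens one y))
             = \<epsilon> (mult x y)) \<and>
     (\<forall>x. tmap (\<lambda>z. tmu mult (tmap S id (\<Delta> z))) id (\<Delta> x)
             = tmult mult (tens one x) (\<Delta> one))"

definition source_cartan :: "(('i::finite \<Rightarrow> complex) \<Rightarrow> ('i \<Rightarrow> complex) \<Rightarrow> ('i \<Rightarrow> complex))
    \<Rightarrow> ('i \<Rightarrow> complex) \<Rightarrow> (('i \<Rightarrow> complex) \<Rightarrow> ('i \<times> 'i \<Rightarrow> complex)) \<Rightarrow> ('i \<Rightarrow> complex) set" where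
  "source_cartan mult one \<Delta> =
     {x. \<Delta> x = tmult mult (\<Delta> one) (tens one x) \<and> \<Delta> x = tmult mult (tens one x) (\<Delta> one)}"

end

theory Submission
  imports Defs
begin


lemma sum_app: "(\<Sum>i\<in>A. f i) x = (\<Sum>i\<in>A. f i x)"
  by (induction A rule: infinite_finite_induct) auto

lemma sc_app: "sc a x k = a * x k" by (simp add: sc_def)
lemma tens_app[simp]: "tens x y (i,j) = x i * y j" by (simp add: tens_def)
lemma bv_app: "bv i k = (if k = i then 1 else 0)" by (simp add: bv_def)
lemma mult_delta[simp]: "(a::complex) * (if P then 1 else 0) = (if P then a else 0)"
  "(if P then 1 else 0) * (a::complex) = (if P then a else 0)" by auto

lemma expand: "x = (\<Sum>i\<in>UNIV. sc (x i) (bv i))" for x :: "'a::finite \<Rightarrow> complex"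
  by (rule ext) (simp add: sum_app bv_app sc_app)

lemma sc_add: "sc a (x + y) = sc a x + sc a y" by (rule ext) (simp add: algebra_simps sc_app)
lemma sc_add2: "sc (a + b) x = sc a x + sc b x" by (rule ext) (simp add: algebra_simps sc_app)
lemma sc_sc: "sc a (sc b x) = sc (a * b) x" by (rule ext) (simp add: algebra_simps sc_app)
lemma sc_sum: "sc a (\<Sum>i\<in>A. f i) = (\<Sum>i\<in>A. sc a (f i))"
  by (rule ext) (simp add: sum_app sum_distrib_left sc_app)
lemma sc_sum2: "sc (\<Sum>i\<in>A. g i) x = (\<Sum>i\<in>A. sc (g i) x)"
  by (rule ext) (simp add: sum_app sum_distrib_right sc_app)
lemma sc_0[simp]: "sc 0 x = 0" "sc a 0 = 0" by (rule ext, simp add: sc_app)+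
lemma sc_1[simp]: "sc 1 x = x" by (rule ext, simp add: sc_app)

lemma clin_add: "clin F \<Longrightarrow> F (x + y) = F x + F y" by (simp add: clin_def)
lemma clin_sc: "clin F \<Longrightarrow> F (sc a x) = sc a (F x)" by (simp add: clin_def)
lemma clin_0: "clin F \<Longrightarrow> F 0 = 0"
  by (metis clin_sc sc_0)
lemma clin_sum: "clin F \<Longrightarrow> F (\<Sum>i\<in>A. g i) = (\<Sum>i\<in>A. F (g i))"
  by (induction A rule: infinite_finite_induct) (auto simp: clin_0 clin_add)
lemma clin_exp: "clin F \<Longrightarrow> F x = (\<Sum>i\<in>UNIV. sc (x i) (F (bv i)))"
  for x :: "'a::finite \<Rightarrow> complex"
  by (subst expand[of x]) (simp add: clin_sum clin_sc)
lemma clin_eq: "clin F \<Longrightarrow> clin G \<Longrightarrow> (\<And>i. F (bv i) = G (bv i)) \<Longrightarrow> F x = G x"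
  for x :: "'a::finite \<Rightarrow> complex"
  by (simp add: clin_exp[of F x] clin_exp[of G x])
lemma clin_eqf: "clin F \<Longrightarrow> clin G \<Longrightarrow> (\<And>i. F (bv i) = G (bv (i::'a::finite))) \<Longrightarrow> F = G"
  by (rule ext, rule clin_eq)

lemma clin_id: "clin (\<lambda>x. x)" "clin id" by (simp_all add: clin_def)
lemma clin_comp: "clin F \<Longrightarrow> clin G \<Longrightarrow> clin (\<lambda>x. F (G x))" by (simp add: clin_def)
lemma clin_plus: "clin F \<Longrightarrow> clin G \<Longrightarrow> clin (\<lambda>x. F x + G x)"
  by (simp add: clin_def sc_add)
lemma clin_scf: "clin F \<Longrightarrow> clin (\<lambda>x. sc c (F x))"
  by (simp add: clin_def sc_add sc_sc mult.commute)
lemma clin_sumf: "(\<And>a. a \<in> A \<Longrightarrow> clin (F a)) \<Longrightarrow> clin (\<lambda>x. \<Sum>a\<in>A. F a x)"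
  unfolding clin_def by (simp add: sum.distrib sc_sum)

lemma clin_tens1: "clin (\<lambda>x. tens x y)" unfolding clin_def
  by (auto intro!: ext simp: tens_def algebra_simps sc_app)
lemma clin_tens2: "clin (\<lambda>y. tens x y)" unfolding clin_def
  by (auto intro!: ext simp: tens_def algebra_simps sc_app)
lemma tens_bv: "tens (bv i) (bv j) = bv (i, j)"
  unfolding bv_def tens_def by (auto intro!: ext)

lemma clin_eq_tens: "clin F \<Longrightarrow> clin G \<Longrightarrow> (\<And>x y. F (tens x y) = G (tens x y)) \<Longrightarrow> F z = G z"
  for z :: "('a::finite \<times> 'b::finite) \<Rightarrow> complex"
  by (rule clin_eq) (auto simp: tens_bv[symmetric])

lemma clin_eq_tens_b: "clin F \<Longrightarrow> clin G \<Longrightarrow> (\<And>i j. F (tens (bv i) (bv j)) = G (tens (bv i) (bv j))) \<Longrightarrow> F z = G z"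
  for z :: "('a::finite \<times> 'b::finite) \<Rightarrow> complex"
  by (rule clin_eq) (auto simp: tens_bv[symmetric])

definition row :: "('a \<times> 'b \<Rightarrow> complex) \<Rightarrow> 'a \<Rightarrow> ('b \<Rightarrow> complex)" where
  "row z i = (\<lambda>j. z (i, j))"
definition col :: "('a \<times> 'b \<Rightarrow> complex) \<Rightarrow> 'b \<Rightarrow> ('a \<Rightarrow> complex)" where
  "col z j = (\<lambda>i. z (i, j))"

lemma clin_row: "clin (\<lambda>z. row z i)" by (auto simp: clin_def row_def sc_app)
lemma clin_col: "clin (\<lambda>z. col z i)" by (auto simp: clin_def col_def sc_app)
lemma row_tens: "row (tens a b) i = sc (a i) b" by (auto simp: row_def sc_def)
lemma col_tens: "col (tens a b) j = sc (b j) a" by (auto simp: col_def sc_def)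

lemma z_row: "z = (\<Sum>a\<in>UNIV. tens (bv a) (row z a))" for z :: "('a::finite \<times> 'b) \<Rightarrow> complex"
  by (rule ext) (auto simp: sum_app bv_app row_def)
lemma z_col: "z = (\<Sum>b\<in>UNIV. tens (col z b) (bv b))" for z :: "('a \<times> 'b::finite) \<Rightarrow> complex"
  by (rule ext) (auto simp: sum_app bv_app col_def)

lemma clin_tmap: "clin (tmap F G)"
  unfolding clin_def tmap_def
  by (auto simp: sc_add2 sum.distrib sc_sc sc_sum sc_app)

lemma tmap_bv: "tmap F G (bv p) = tens (F (bv (fst p))) (G (bv (snd p)))"
  unfolding tmap_def bv_app
  by (simp add: if_distrib[of "\<lambda>c. sc c _"] cong: if_cong)


lemma tmap_tens: "clin F \<Longrightarrow> clin G \<Longrightarrow> tmap F G (tens x y) = tens (F x) (G y)"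
proof -
  assume F: "clin F" and G: "clin G"
  have b: "tmap F G (tens (bv i) (bv j)) = tens (F (bv i)) (G (bv j))" for i j
    by (simp add: tens_bv tmap_bv)
  have c: "tmap F G (tens x (bv j)) = tens (F x) (G (bv j))" for x j
    by (rule clin_eq[OF clin_comp[OF clin_tmap clin_tens1] clin_comp[OF clin_tens1 F]]) (simp add: b)
  show ?thesis
    by (rule clin_eq[OF clin_comp[OF clin_tmap clin_tens2] clin_comp[OF clin_tens2 G]]) (simp add: c)
qed

lemma clin_tmult1: "clin (\<lambda>z. tmult m z w)"
  unfolding clin_def tmult_def
  by (auto simp: sc_add2 sum.distrib sc_sc sc_sum sc_app algebra_simps)
lemma clin_tmult2: "clin (tmult m z)"
  unfolding clin_def tmult_def
  by (auto simp: sc_add2 sum.distrib sc_sc sc_sum sc_app algebra_simps)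

lemma tmult_bv: "tmult m (bv p) (bv q) = tens (m (bv (fst p)) (bv (fst q))) (m (bv (snd p)) (bv (snd q)))"
  unfolding tmult_def bv_app
  by (simp add: if_distrib[of "\<lambda>c. sc c _"] cong: if_cong)

definition bil :: "(('a \<Rightarrow> complex) \<Rightarrow> ('a \<Rightarrow> complex) \<Rightarrow> ('a \<Rightarrow> complex)) \<Rightarrow> bool" where
  "bil m \<longleftrightarrow> (\<forall>x. clin (m x)) \<and> (\<forall>y. clin (\<lambda>x. m x y))"

lemma tmult_tens: "bil m \<Longrightarrow> tmult m (tens a b) (tens c d) = tens (m a c) (m b d)"
proof -
  assume m: "bil m"
  have m1: "clin (m x)" and m2: "clin (\<lambda>x. m x y)" for x y using m by (auto simp: bil_def)
  have s0: "tmult m (tens (bv i) (bv j)) (tens (bv k) (bv l)) = tens (m (bv i) (bv k)) (m (bv j) (bv l))" for i j k l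
    by (simp add: tens_bv tmult_bv)
  have s1: "tmult m (tens a (bv j)) (tens (bv k) (bv l)) = tens (m a (bv k)) (m (bv j) (bv l))" for a j k l
    by (rule clin_eq[OF clin_comp[OF clin_tmult1 clin_tens1] clin_comp[OF clin_tens1 m2]]) (simp add: s0)
  have s2: "tmult m (tens a b) (tens (bv k) (bv l)) = tens (m a (bv k)) (m b (bv l))" for a b k l
    by (rule clin_eq[OF clin_comp[OF clin_tmult1 clin_tens2] clin_comp[OF clin_tens2 m2]]) (simp add: s1)
  have s3: "tmult m (tens a b) (tens c (bv l)) = tens (m a c) (m b (bv l))" for a b c l
    by (rule clin_eq[OF clin_comp[OF clin_tmult2 clin_tens1] clin_comp[OF clin_tens1 m1]]) (simp add: s2)
  show ?thesis
    by (rule clin_eq[OF clin_comp[OF clin_tmult2 clin_tens2] clin_comp[OF clin_tens2 m1]]) (simp add: s3)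
qed




lemma clin_eq_tens2:
  fixes F G :: "(('a::finite \<times> 'b::finite) \<Rightarrow> complex) \<Rightarrow> (('c::finite \<times> 'd::finite) \<Rightarrow> complex) \<Rightarrow> ('e \<Rightarrow> complex)"
  assumes "\<And>w. clin (\<lambda>z. F z w)" "\<And>w. clin (\<lambda>z. G z w)" "\<And>z. clin (F z)" "\<And>z. clin (G z)"
    and "\<And>a b c d. F (tens a b) (tens c d) = G (tens a b) (tens c d)"
  shows "F z w = G z w"
proof -
  have "F (tens a b) w = G (tens a b) w" for a b
    by (rule clin_eq_tens[OF assms(3) assms(4)]) (rule assms(5))
  then show ?thesis by (rule clin_eq_tens[OF assms(1) assms(2)])
qed

lemma bilD: "bil m \<Longrightarrow> clin (m x)" "bil m \<Longrightarrow> clin (\<lambda>x. m x y)" by (auto simp: bil_def)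

lemma tmult_assoc:
  assumes m: "bil m" and a: "\<And>x y z. m (m x y) z = m x (m y z)"
  shows "tmult m (tmult m z w) v = tmult m z (tmult m w v)"
proof -
  have s0: "tmult m (tmult m (tens a b) (tens c d)) (tens g h) = tmult m (tens a b) (tmult m (tens c d) (tens g h))" for a b c d g h
    by (simp add: tmult_tens[OF m] a)
  have s1: "tmult m (tmult m (tens a b) (tens c d)) v = tmult m (tens a b) (tmult m (tens c d) v)" for a b c d
    by (rule clin_eq_tens[OF clin_tmult2 clin_comp[OF clin_tmult2 clin_tmult2]]) (rule s0)
  have s2: "tmult m (tmult m (tens a b) w) v = tmult m (tens a b) (tmult m w v)" for a b
    by (rule clin_eq_tens[OF clin_comp[OF clin_tmult1 clin_tmult2] clin_comp[OF clin_tmult2 clin_tmult1]]) (rule s1)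
  show ?thesis
    by (rule clin_eq_tens[OF clin_comp[OF clin_tmult1 clin_tmult1] clin_tmult1]) (rule s2)
qed

lemma tmap_tmult_anti:
  assumes m: "bil m" and S: "clin S" and anti: "\<And>x y. S (m x y) = m (S y) (S x)"
  shows "tmap S S (tmult m z w) = tmult m (tmap S S w) (tmap S S z)"
  by (rule clin_eq_tens2[of "\<lambda>z w. tmap S S (tmult m z w)" "\<lambda>z w. tmult m (tmap S S w) (tmap S S z)",
        OF clin_comp[OF clin_tmap clin_tmult1] clin_comp[OF clin_tmult2 clin_tmap]
        clin_comp[OF clin_tmap clin_tmult2] clin_comp[OF clin_tmult1 clin_tmap]])
     (simp add: tmult_tens[OF m] tmap_tens[OF S S] anti)

lemma clin_flip: "clin flip" by (auto simp: clin_def flip_def sc_def)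
lemma flip_tens: "flip (tens a b) = tens b a" by (auto simp: flip_def tens_def)
lemma flip_flip: "flip (flip z) = z" by (auto simp: flip_def)
lemma flip_tmult: assumes m: "bil m" shows "flip (tmult m z w) = tmult m (flip z) (flip w)"
  by (rule clin_eq_tens2[of "\<lambda>z w. flip (tmult m z w)" "\<lambda>z w. tmult m (flip z) (flip w)",
        OF clin_comp[OF clin_flip clin_tmult1] clin_comp[OF clin_tmult1 clin_flip]
        clin_comp[OF clin_flip clin_tmult2] clin_comp[OF clin_tmult2 clin_flip]])
     (simp add: tmult_tens[OF m] flip_tens)
lemma flip_tmap: assumes F: "clin F" and G: "clin G" shows "flip (tmap F G z) = tmap G F (flip z)"
  by (rule clin_eq_tens[OF clin_comp[OF clin_flip clin_tmap] clin_comp[OF clin_tmap clin_flip]])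
     (simp add: tmap_tens[OF F G] tmap_tens[OF G F] flip_tens)
lemma tmap_comp: assumes F: "clin F" and G: "clin G" and F': "clin F'" and G': "clin G'" shows
   "tmap F G (tmap F' G' z) = tmap (\<lambda>x. F (F' x)) (\<lambda>x. G (G' x)) z"
  by (rule clin_eq_tens[OF clin_comp[OF clin_tmap clin_tmap] clin_tmap])
     (simp add: tmap_tens[OF F G] tmap_tens[OF F' G'] tmap_tens[OF clin_comp[OF F F'] clin_comp[OF G G']])
lemma tmap_idid: "tmap (\<lambda>x. x) (\<lambda>x. x) z = z"
  by (rule clin_eq_tens[OF clin_tmap clin_id(1)]) (simp add: tmap_tens[OF clin_id(1) clin_id(1)])

lemma tmult_one:
  assumes m: "bil m" and u: "\<And>x. m one x = x" "\<And>x. m x one = x"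
  shows "tmult m (tens one one) z = z" "tmult m z (tens one one) = z"
  by (rule clin_eq_tens[OF clin_tmult2 clin_id(1)], simp add: tmult_tens[OF m] u)
     (rule clin_eq_tens[OF clin_tmult1 clin_id(1)], simp add: tmult_tens[OF m] u)

lemma antilin_add: "antilin F \<Longrightarrow> F (x + y) = F x + F y" by (simp add: antilin_def)
lemma antilin_sc: "antilin F \<Longrightarrow> F (sc a x) = sc (cnj a) (F x)" by (simp add: antilin_def)
lemma antilin_0: assumes a: "antilin F" shows "F 0 = 0"
proof -
  have "F 0 = F (sc 0 0)" by simp
  also have "\<dots> = sc (cnj 0) (F 0)" by (rule antilin_sc[OF a])
  finally show ?thesis by simp
qed
lemma antilin_sum: "antilin F \<Longrightarrow> F (\<Sum>i\<in>A. g i) = (\<Sum>i\<in>A. F (g i))"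
  by (induction A rule: infinite_finite_induct) (auto simp: antilin_0 antilin_add)
lemma antilin_exp: "antilin F \<Longrightarrow> F x = (\<Sum>i\<in>UNIV. sc (cnj (x i)) (F (bv i)))"
  for x :: "'a::finite \<Rightarrow> complex"
  by (subst expand[of x]) (simp add: antilin_sum antilin_sc)
lemma antilin_eq: "antilin F \<Longrightarrow> antilin G \<Longrightarrow> (\<And>i. F (bv i) = G (bv i)) \<Longrightarrow> F x = G x"
  for x :: "'a::finite \<Rightarrow> complex"
  by (simp add: antilin_exp[of F x] antilin_exp[of G x])
lemma antilin_eq_tens: "antilin F \<Longrightarrow> antilin G \<Longrightarrow> (\<And>x y. F (tens x y) = G (tens x y)) \<Longrightarrow> F z = G z"
  for z :: "('a::finite \<times> 'b::finite) \<Rightarrow> complex"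
  by (rule antilin_eq) (auto simp: tens_bv[symmetric])
lemma antilin_comp1: "clin F \<Longrightarrow> antilin G \<Longrightarrow> antilin (\<lambda>x. F (G x))"
  by (simp add: clin_def antilin_def)
lemma antilin_comp2: "antilin F \<Longrightarrow> clin G \<Longrightarrow> antilin (\<lambda>x. F (G x))"
  by (simp add: clin_def antilin_def)
lemma antilin_comp3: "antilin F \<Longrightarrow> antilin G \<Longrightarrow> clin (\<lambda>x. F (G x))"
  by (simp add: clin_def antilin_def)
lemma antilin_tstar: "antilin (tstar st)"
  unfolding antilin_def tstar_def
proof (intro conjI allI)
  fix x y :: "'a \<times> 'a \<Rightarrow> complex"
  show "(\<Sum>ij\<in>UNIV. sc (cnj ((x + y) ij)) (tens (st (bv (fst ij))) (st (bv (snd ij))))) =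
    (\<Sum>ij\<in>UNIV. sc (cnj (x ij)) (tens (st (bv (fst ij))) (st (bv (snd ij))))) +
    (\<Sum>ij\<in>UNIV. sc (cnj (y ij)) (tens (st (bv (fst ij))) (st (bv (snd ij)))))"
    by (simp add: sc_add2 sum.distrib)
next
  fix a and x :: "'a \<times> 'a \<Rightarrow> complex"
  show "(\<Sum>ij\<in>UNIV. sc (cnj (sc a x ij)) (tens (st (bv (fst ij))) (st (bv (snd ij))))) =
    sc (cnj a) (\<Sum>ij\<in>UNIV. sc (cnj (x ij)) (tens (st (bv (fst ij))) (st (bv (snd ij)))))"
    by (simp add: sc_sum sc_sc sc_app)
qed
lemma tstar_bv: "tstar st (bv p) = tens (st (bv (fst p))) (st (bv (snd p)))"
  unfolding tstar_def bv_app
  by (simp add: if_distrib[of "\<lambda>c. sc (cnj c) _"] cong: if_cong)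
lemma tstar_tens: assumes st: "antilin st" shows "tstar st (tens a b) = tens (st a) (st b)"
proof -
  have b: "tstar st (tens (bv i) (bv j)) = tens (st (bv i)) (st (bv j))" for i j
    by (simp add: tens_bv tstar_bv)
  have c: "tstar st (tens x (bv j)) = tens (st x) (st (bv j))" for x j
    by (rule antilin_eq[OF antilin_comp2[OF antilin_tstar clin_tens1] antilin_comp1[OF clin_tens1 st]]) (simp add: b)
  show ?thesis
    by (rule antilin_eq[OF antilin_comp2[OF antilin_tstar clin_tens2] antilin_comp1[OF clin_tens2 st]]) (simp add: c)
qed
lemma tstar_tmult:
  assumes m: "bil m" and st: "antilin st" and anti: "\<And>x y. st (m x y) = m (st y) (st x)"
  shows "tstar st (tmult m z w) = tmult m (tstar st w) (tstar st z)"
proof -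
  have s0: "tstar st (tmult m (tens a b) (tens c d)) = tmult m (tstar st (tens c d)) (tstar st (tens a b))" for a b c d
    by (simp add: tmult_tens[OF m] tstar_tens[OF st] anti)
  have s1: "tstar st (tmult m (tens a b) w) = tmult m (tstar st w) (tstar st (tens a b))" for a b
    by (rule antilin_eq_tens[OF antilin_comp2[OF antilin_tstar clin_tmult2] antilin_comp1[OF clin_tmult1 antilin_tstar]]) (rule s0)
  show ?thesis
    by (rule antilin_eq_tens[OF antilin_comp2[OF antilin_tstar clin_tmult1] antilin_comp1[OF clin_tmult2 antilin_tstar]]) (rule s1)
qed
lemma tstar_tstar: assumes st: "antilin st" and inv: "\<And>x. st (st x) = x" shows "tstar st (tstar st z) = z"
  by (rule clin_eq_tens[OF antilin_comp3[OF antilin_tstar antilin_tstar] clin_id(1)]) (simp add: tstar_tens[OF st] inv)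

lemma lf_add: "lfunctional \<phi> \<Longrightarrow> \<phi> (x + y) = \<phi> x + \<phi> y" by (simp add: lfunctional_def)
lemma lf_sc: "lfunctional \<phi> \<Longrightarrow> \<phi> (sc a x) = a * \<phi> x" by (simp add: lfunctional_def)
lemma lf_0: assumes a: "lfunctional \<phi>" shows "\<phi> 0 = 0"
proof -
  have "\<phi> 0 = \<phi> (sc 0 0)" by simp
  also have "\<dots> = 0 * \<phi> 0" by (rule lf_sc[OF a])
  finally show ?thesis by simp
qed
lemma lf_sum: "lfunctional \<phi> \<Longrightarrow> \<phi> (\<Sum>i\<in>A. g i) = (\<Sum>i\<in>A. \<phi> (g i))"
  by (induction A rule: infinite_finite_induct) (auto simp: lf_0 lf_add)
lemma clin_lfsc: "lfunctional \<phi> \<Longrightarrow> clin (\<lambda>b. sc (\<phi> b) a)"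
  by (simp add: clin_def lf_add lf_sc sc_add2 sc_sc)

lemma clin_rslice: "clin (rslice \<phi>)"
  unfolding clin_def rslice_def
proof (intro conjI allI)
  fix x y :: "'a \<times> 'b \<Rightarrow> complex"
  show "(\<Sum>ij\<in>UNIV. sc ((x + y) ij * \<phi> (bv (snd ij))) (bv (fst ij))) =
    (\<Sum>ij\<in>UNIV. sc (x ij * \<phi> (bv (snd ij))) (bv (fst ij))) + (\<Sum>ij\<in>UNIV. sc (y ij * \<phi> (bv (snd ij))) (bv (fst ij)))"
    by (simp add: sc_add2 sum.distrib distrib_right)
next
  fix a and x :: "'a \<times> 'b \<Rightarrow> complex"
  show "(\<Sum>ij\<in>UNIV. sc (sc a x ij * \<phi> (bv (snd ij))) (bv (fst ij))) =
    sc a (\<Sum>ij\<in>UNIV. sc (x ij * \<phi> (bv (snd ij))) (bv (fst ij)))"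
    by (simp add: sc_sum sc_sc sc_app mult.assoc)
qed
lemma rslice_bv: "rslice \<phi> (bv p) = sc (\<phi> (bv (snd p))) (bv (fst p))"
  unfolding rslice_def
  by (simp add: bv_app[of p] if_distrib[of "\<lambda>c. sc c _"] cong: if_cong)
lemma rslice_tens: assumes \<phi>: "lfunctional \<phi>" shows "rslice \<phi> (tens a b) = sc (\<phi> b) a"
proof -
  have c: "rslice \<phi> (tens x (bv j)) = sc (\<phi> (bv j)) x" for x j
    by (rule clin_eq[OF clin_comp[OF clin_rslice clin_tens1] clin_scf[OF clin_id(1)]])
       (simp add: tens_bv rslice_bv)
  show ?thesis
    by (rule clin_eq[OF clin_comp[OF clin_rslice clin_tens2] clin_lfsc[OF \<phi>]]) (simp add: c)
qed
lemma rslice_tmap: assumes \<phi>: "lfunctional \<phi>" and G: "clin G" shows "rslice \<phi> (tmap G id z) = G (rslice \<phi> z)"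
  by (rule clin_eq_tens[OF clin_comp[OF clin_rslice clin_tmap] clin_comp[OF G clin_rslice]])
     (simp add: tmap_tens[OF G clin_id(2)] rslice_tens[OF \<phi>] clin_sc[OF G])

lemma clin_tmu: "clin (tmu m)"
  unfolding clin_def tmu_def
proof (intro conjI allI)
  fix x y :: "'a \<times> 'a \<Rightarrow> complex"
  show "(\<Sum>ij\<in>UNIV. sc ((x + y) ij) (m (bv (fst ij)) (bv (snd ij)))) =
    (\<Sum>ij\<in>UNIV. sc (x ij) (m (bv (fst ij)) (bv (snd ij)))) + (\<Sum>ij\<in>UNIV. sc (y ij) (m (bv (fst ij)) (bv (snd ij))))"
    by (simp add: sc_add2 sum.distrib)
next
  fix a and x :: "'a \<times> 'a \<Rightarrow> complex"
  show "(\<Sum>ij\<in>UNIV. sc (sc a x ij) (m (bv (fst ij)) (bv (snd ij)))) =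
    sc a (\<Sum>ij\<in>UNIV. sc (x ij) (m (bv (fst ij)) (bv (snd ij))))"
    by (simp add: sc_sum sc_sc sc_app)
qed
lemma tmu_bv: "tmu m (bv p) = m (bv (fst p)) (bv (snd p))"
  unfolding tmu_def bv_app
  by (simp add: if_distrib[of "\<lambda>c. sc c _"] cong: if_cong)
lemma tmu_tens: assumes m: "bil m" shows "tmu m (tens a b) = m a b"
proof -
  have c: "tmu m (tens x (bv j)) = m x (bv j)" for x j
    by (rule clin_eq[OF clin_comp[OF clin_tmu clin_tens1] bilD(2)[OF m]]) (simp add: tens_bv tmu_bv)
  show ?thesis
    by (rule clin_eq[OF clin_comp[OF clin_tmu clin_tens2] bilD(1)[OF m]]) (simp add: c)
qed

lemma row_tmult_1x:
  assumes m: "bil m" and u: "\<And>y. m one y = y"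
  shows "row (tmult m (tens one x) z) i = m x (row z i)"
  by (rule clin_eq_tens[OF clin_comp[OF clin_row clin_tmult2] clin_comp[OF bilD(1)[OF m] clin_row]])
     (simp add: tmult_tens[OF m] u row_tens clin_sc[OF bilD(1)[OF m]])
lemma col_tmult_y1:
  assumes m: "bil m" and u: "\<And>y. m y one = y"
  shows "col (tmult m z (tens y one)) k = m (col z k) y"
  by (rule clin_eq_tens[OF clin_comp[OF clin_col clin_tmult1] clin_comp[OF bilD(2)[OF m] clin_col]])
     (simp add: tmult_tens[OF m] u col_tens clin_sc[OF bilD(2)[OF m]])
lemma row_tmap_id: assumes G: "clin G" shows "row (tmap id G z) i = G (row z i)"
  by (rule clin_eq_tens[OF clin_comp[OF clin_row clin_tmap] clin_comp[OF G clin_row]])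
     (simp add: tmap_tens[OF clin_id(2) G] row_tens clin_sc[OF G])
lemma col_tmap_id: assumes G: "clin G" shows "col (tmap G id z) k = G (col z k)"
  by (rule clin_eq_tens[OF clin_comp[OF clin_col clin_tmap] clin_comp[OF G clin_col]])
     (simp add: tmap_tens[OF G clin_id(2)] col_tens clin_sc[OF G])




locale wkac =
  fixes mult :: "('i::finite \<Rightarrow> complex) \<Rightarrow> ('i \<Rightarrow> complex) \<Rightarrow> ('i \<Rightarrow> complex)"
    and star :: "('i \<Rightarrow> complex) \<Rightarrow> ('i \<Rightarrow> complex)"
    and one :: "'i \<Rightarrow> complex"
    and \<Delta> :: "('i \<Rightarrow> complex) \<Rightarrow> ('i \<times> 'i \<Rightarrow> complex)"
    and S :: "('i \<Rightarrow> complex) \<Rightarrow> ('i \<Rightarrow> complex)"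
    and \<epsilon> :: "('i \<Rightarrow> complex) \<Rightarrow> complex"
  assumes wka: "weak_kac_algebra mult star one \<Delta> S \<epsilon>"
begin

abbreviation "e \<equiv> \<Delta> one"
definition "es z = tmu mult (tmap S id (\<Delta> z))"
abbreviation "Ns \<equiv> source_cartan mult one \<Delta>"

lemma fd: "fd_cstar_algebra mult star one" using wka by (simp add: weak_kac_algebra_def)
lemma m: "bil mult" using fd by (simp add: fd_cstar_algebra_def bil_def)
lemma m1: "clin (mult x)" and m2: "clin (\<lambda>x. mult x y)" using m by (auto simp: bil_def)
lemma massoc: "mult (mult x y) z = mult x (mult y z)" using fd by (simp add: fd_cstar_algebra_def)
lemma munit: "mult one x = x" "mult x one = x" using fd by (simp_all add: fd_cstar_algebra_def)
lemma st_al: "antilin star" using fd by (simp add: fd_cstar_algebra_def)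
lemma stst: "star (star x) = x" using fd by (simp add: fd_cstar_algebra_def)
lemma st_anti: "star (mult x y) = mult (star y) (star x)" using fd by (simp add: fd_cstar_algebra_def)
lemma D_lin: "clin \<Delta>" and D_inj: "inj \<Delta>" and D_mult: "\<Delta> (mult x y) = tmult mult (\<Delta> x) (\<Delta> y)"
  and D_star: "\<Delta> (star x) = tstar star (\<Delta> x)"
  and coassoc: "reassoc (tmap \<Delta> id (\<Delta> x)) = tmap id \<Delta> (\<Delta> x)"
  using wka by (simp_all add: weak_kac_algebra_def)
lemma S_lin: "clin S" and S_one: "S one = one" and S_anti: "S (mult x y) = mult (S y) (S x)"
  and SS: "S (S x) = x" and S_D: "tmap S S (\<Delta> x) = flip (\<Delta> (S x))"
  using wka by (simp_all add: weak_kac_algebra_def)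
lemma eps_lf: "lfunctional \<epsilon>" and eps_r: "rslice \<epsilon> (\<Delta> x) = x"
  and E3: "tmap es id (\<Delta> x) = tmult mult (tens one x) e"
  using wka by (simp_all add: weak_kac_algebra_def es_def[abs_def])

lemma es_lin: "clin es"
  unfolding es_def[abs_def] by (rule clin_comp[OF clin_tmu clin_comp[OF clin_tmap D_lin]])

lemma star_one: "star one = one"
proof -
  have "star one = mult (star one) one" by (simp add: munit)
  hence "star (star one) = star (mult (star one) one)" by simp
  hence "one = mult (star one) (star (star one))" by (simp add: stst st_anti)
  thus ?thesis by (simp add: stst munit)
qed

lemma tstar_e: "tstar star e = e" using D_star[of one] by (simp add: star_one)
lemma tmapSS_e: "tmap S S e = flip e" using S_D[of one] by (simp add: S_one)
lemma e_es: "tmap es id e = e" using E3[of one] by (simp add: tmult_one[OF m munit])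

lemma tmapG_id_app: "clin G \<Longrightarrow> tmap G id z (i, j) = (\<Sum>a\<in>UNIV. z (a, j) * G (bv a) i)"
proof -
  assume G: "clin G"
  have "tmap G id z (i, j) = col (tmap G id z) j i" by (simp add: col_def)
  also have "\<dots> = G (col z j) i" by (simp add: col_tmap_id[OF G])
  also have "\<dots> = (\<Sum>a\<in>UNIV. z (a, j) * G (bv a) i)"
    by (subst clin_exp[OF G]) (simp add: sum_app sc_app col_def)
  finally show ?thesis .
qed

lemma row_e_exp: "row e i = (\<Sum>a\<in>UNIV. sc (es (bv a) i) (row e a))"
proof (rule ext)
  fix b
  have "row e i b = tmap es id e (i, b)" by (simp add: row_def e_es)
  also have "\<dots> = (\<Sum>a\<in>UNIV. e (a, b) * es (bv a) i)" by (rule tmapG_id_app[OF es_lin])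
  finally show "row e i b = (\<Sum>a\<in>UNIV. sc (es (bv a) i) (row e a)) b"
    by (simp add: sum_app sc_app row_def mult.commute)
qed

lemma coassoc_pt: "\<Delta> (row e i) (j, k) = \<Delta> (col e k) (i, j)"
proof -
  have "\<Delta> (row e i) (j, k) = row (tmap id \<Delta> e) i (j, k)" by (simp add: row_tmap_id[OF D_lin])
  also have "\<dots> = reassoc (tmap \<Delta> id e) (i, (j, k))" by (simp add: row_def coassoc)
  also have "\<dots> = col (tmap \<Delta> id e) k (i, j)" by (simp add: reassoc_def col_def)
  also have "\<dots> = \<Delta> (col e k) (i, j)" by (simp add: col_tmap_id[OF D_lin])
  finally show ?thesis .
qed

lemma stepA: "\<Delta> (row e i) = tmult mult e (tens (row e i) one)"
proof (rule ext, clarify)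
  fix j k
  have "\<Delta> (row e i) = (\<Sum>a\<in>UNIV. sc (es (bv a) i) (\<Delta> (row e a)))"
    by (subst row_e_exp) (simp add: clin_sum[OF D_lin] clin_sc[OF D_lin])
  hence "\<Delta> (row e i) (j, k) = (\<Sum>a\<in>UNIV. es (bv a) i * \<Delta> (row e a) (j, k))"
    by (simp add: sum_app sc_app)
  also have "\<dots> = (\<Sum>a\<in>UNIV. \<Delta> (col e k) (a, j) * es (bv a) i)"
    by (simp add: coassoc_pt mult.commute)
  also have "\<dots> = tmap es id (\<Delta> (col e k)) (i, j)" by (simp add: tmapG_id_app[OF es_lin])
  also have "\<dots> = tmult mult (tens one (col e k)) e (i, j)" by (simp add: E3)
  also have "\<dots> = row (tmult mult (tens one (col e k)) e) i j" by (simp add: row_def)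
  also have "\<dots> = mult (col e k) (row e i) j" by (simp add: row_tmult_1x[OF m munit(1)])
  also have "\<dots> = col (tmult mult e (tens (row e i) one)) k j" by (simp add: col_tmult_y1[OF m munit(2)])
  also have "\<dots> = tmult mult e (tens (row e i) one) (j, k)" by (simp add: col_def)
  finally show "\<Delta> (row e i) (j, k) = tmult mult e (tens (row e i) one) (j, k)" .
qed

lemma tstar_row: "tstar star z = (\<Sum>a\<in>UNIV. tens (star (bv a)) (star (row z a)))"
proof -
  have "tstar star z = tstar star (\<Sum>a\<in>UNIV. tens (bv a) (row z a))" by (subst z_row) simp
  also have "\<dots> = (\<Sum>a\<in>UNIV. tens (star (bv a)) (star (row z a)))"
    by (simp add: antilin_sum[OF antilin_tstar] tstar_tens[OF st_al])
  finally show ?thesis .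
qed

lemma stepB: "\<Delta> (row e i) = tmult mult (tens (row e i) one) e"
proof -
  have r: "row e i = (\<Sum>a\<in>UNIV. sc (star (bv a) i) (star (row e a)))"
  proof -
    have "row e i = row (\<Sum>a\<in>UNIV. tens (star (bv a)) (star (row e a))) i"
      using tstar_row[of e] tstar_e by simp
    also have "\<dots> = (\<Sum>a\<in>UNIV. sc (star (bv a) i) (star (row e a)))"
      by (simp add: clin_sum[OF clin_row] row_tens)
    finally show ?thesis .
  qed
  have d: "\<Delta> (star (row e a)) = tmult mult (tens (star (row e a)) one) e" for a
  proof -
    have "\<Delta> (star (row e a)) = tstar star (tmult mult e (tens (row e a) one))" by (simp add: D_star stepA)
    also have "\<dots> = tmult mult (tens (star (row e a)) one) e"
      by (simp add: tstar_tmult[OF m st_al st_anti] tstar_tens[OF st_al] star_one tstar_e)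
    finally show ?thesis .
  qed
  have L: "clin (\<lambda>y. tmult mult (tens y one) e)" by (rule clin_comp[OF clin_tmult1 clin_tens1])
  have "\<Delta> (row e i) = (\<Sum>a\<in>UNIV. sc (star (bv a) i) (\<Delta> (star (row e a))))"
    by (subst r) (simp add: clin_sum[OF D_lin] clin_sc[OF D_lin])
  also have "\<dots> = (\<Sum>a\<in>UNIV. sc (star (bv a) i) (tmult mult (tens (star (row e a)) one) e))"
    by (simp add: d)
  also have "\<dots> = tmult mult (tens (\<Sum>a\<in>UNIV. sc (star (bv a) i) (star (row e a))) one) e"
    by (simp add: clin_sum[OF L] clin_sc[OF L])
  also have "\<dots> = tmult mult (tens (row e i) one) e" by (simp only: r[symmetric])
  finally show ?thesis .
qed

end


context wkac begin

lemma SS_fun: "(\<lambda>x. S (S x)) = (\<lambda>x. x)" by (rule ext) (simp add: SS)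
lemma tmapSS_inv: "tmap S S (tmap S S z) = z"
  by (simp add: tmap_comp[OF S_lin S_lin S_lin S_lin] SS_fun tmap_idid)
lemma D_S: "\<Delta> (S y) = tmap S S (flip (\<Delta> y))"
proof -
  have "tmap S S (\<Delta> (S y)) = flip (\<Delta> y)" using S_D[of "S y"] by (simp add: SS)
  hence "tmap S S (tmap S S (\<Delta> (S y))) = tmap S S (flip (\<Delta> y))" by simp
  thus ?thesis by (simp add: tmapSS_inv)
qed
lemma SF_tmult: "tmap S S (flip (tmult mult z w)) = tmult mult (tmap S S (flip w)) (tmap S S (flip z))"
  by (simp add: flip_tmult[OF m] tmap_tmult_anti[OF m S_lin S_anti])
lemma SF_tens: "tmap S S (flip (tens a b)) = tens (S b) (S a)"
  by (simp add: flip_tens tmap_tens[OF S_lin S_lin])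
lemma SF_e: "tmap S S (flip e) = e"
proof -
  have "tmap S S (flip e) = flip (tmap S S e)" by (simp add: flip_tmap[OF S_lin S_lin])
  also have "\<dots> = e" by (simp add: tmapSS_e flip_flip)
  finally show ?thesis .
qed
lemma transfer1: "\<Delta> y = tmult mult e (tens one y) \<Longrightarrow> \<Delta> (S y) = tmult mult (tens (S y) one) e"
  by (simp add: D_S SF_tmult SF_tens SF_e S_one)
lemma transfer2: "\<Delta> y = tmult mult (tens one y) e \<Longrightarrow> \<Delta> (S y) = tmult mult e (tens (S y) one)"
  by (simp add: D_S SF_tmult SF_tens SF_e S_one)
lemma transfer3: "\<Delta> y = tmult mult e (tens y one) \<Longrightarrow> \<Delta> (S y) = tmult mult (tens one (S y)) e"
  by (simp add: D_S SF_tmult SF_tens SF_e S_one)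
lemma transfer4: "\<Delta> y = tmult mult (tens y one) e \<Longrightarrow> \<Delta> (S y) = tmult mult e (tens one (S y))"
  by (simp add: D_S SF_tmult SF_tens SF_e S_one)

lemma Srow_Ns: "S (row e i) \<in> Ns"
  unfolding source_cartan_def using transfer4[OF stepB] transfer3[OF stepA] by simp

lemma L1: "clin (\<lambda>x. tmult mult e (tens one x))" by (rule clin_comp[OF clin_tmult2 clin_tens2])
lemma L2: "clin (\<lambda>x. tmult mult (tens one x) e)" by (rule clin_comp[OF clin_tmult1 clin_tens2])

lemma Ns_add: assumes "x \<in> Ns" "y \<in> Ns" shows "x + y \<in> Ns"
proof -
  have ax: "\<Delta> x = tmult mult e (tens one x) \<and> \<Delta> x = tmult mult (tens one x) e"
    using assms(1) unfolding source_cartan_def by (rule CollectD)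
  have ay: "\<Delta> y = tmult mult e (tens one y) \<and> \<Delta> y = tmult mult (tens one y) e"
    using assms(2) unfolding source_cartan_def by (rule CollectD)
  note a = conjunct1[OF ax] conjunct2[OF ax] conjunct1[OF ay] conjunct2[OF ay]
  have 1: "\<Delta> (x + y) = tmult mult e (tens one (x + y))"
    by (simp only: clin_add[OF D_lin] clin_add[OF L1] a(1) a(3))
  have 2: "\<Delta> (x + y) = tmult mult (tens one (x + y)) e"
    by (simp only: clin_add[OF D_lin] clin_add[OF L2] a(2) a(4))
  show ?thesis unfolding source_cartan_def by (rule CollectI, rule conjI[OF 1 2])
qed
lemma Ns_sc: assumes "x \<in> Ns" shows "sc a x \<in> Ns"
proof -
  have ax: "\<Delta> x = tmult mult e (tens one x) \<and> \<Delta> x = tmult mult (tens one x) e"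
    using assms(1) unfolding source_cartan_def by (rule CollectD)
  have 1: "\<Delta> (sc a x) = tmult mult e (tens one (sc a x))"
    by (simp only: clin_sc[OF D_lin] clin_sc[OF L1] conjunct1[OF ax])
  have 2: "\<Delta> (sc a x) = tmult mult (tens one (sc a x)) e"
    by (simp only: clin_sc[OF D_lin] clin_sc[OF L2] conjunct2[OF ax])
  show ?thesis unfolding source_cartan_def by (rule CollectI, rule conjI[OF 1 2])
qed
lemma Ns_0: "0 \<in> Ns"
  unfolding source_cartan_def by (simp add: clin_0[OF D_lin] clin_0[OF L1] clin_0[OF L2])
lemma Ns_sum: "(\<And>a. a \<in> A \<Longrightarrow> g a \<in> Ns) \<Longrightarrow> (\<Sum>a\<in>A. g a) \<in> Ns"
  by (induction A rule: infinite_finite_induct) (auto simp: Ns_0 Ns_add)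

lemma col_e: "col e j = (\<Sum>a\<in>UNIV. sc (S (bv a) j) (S (row e a)))"
proof -
  have t: "tmap S S e = (\<Sum>a\<in>UNIV. tens (S (bv a)) (S (row e a)))"
    by (subst z_row) (simp add: clin_sum[OF clin_tmap] tmap_tens[OF S_lin S_lin])
  have "e = flip (tmap S S e)" by (simp add: tmapSS_e flip_flip)
  also have "\<dots> = (\<Sum>a\<in>UNIV. tens (S (row e a)) (S (bv a)))"
    by (simp add: t clin_sum[OF clin_flip] flip_tens)
  finally have "col e j = col (\<Sum>a\<in>UNIV. tens (S (row e a)) (S (bv a))) j" by simp
  thus ?thesis by (simp add: clin_sum[OF clin_col] col_tens)
qed

lemma col_Ns: "col e j \<in> Ns"
  by (subst col_e) (intro Ns_sum Ns_sc Srow_Ns)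

lemma D3: "es z = rslice \<epsilon> (tmult mult (tens one z) e)"
proof -
  have "rslice \<epsilon> (tmap es id (\<Delta> z)) = es (rslice \<epsilon> (\<Delta> z))" by (rule rslice_tmap[OF eps_lf es_lin])
  thus ?thesis by (simp add: E3 eps_r)
qed

lemma es_one: "es one = one"
  using D3[of one] by (simp add: tmult_one[OF m munit] eps_r)

lemma Ns_D: assumes "x \<in> Ns" shows "\<Delta> x = tmult mult e (tens one x)" "\<Delta> x = tmult mult (tens one x) e"
proof -
  have ax: "\<Delta> x = tmult mult e (tens one x) \<and> \<Delta> x = tmult mult (tens one x) e"
    using assms unfolding source_cartan_def by (rule CollectD)
  show "\<Delta> x = tmult mult e (tens one x)" "\<Delta> x = tmult mult (tens one x) e" using ax by (rule conjunct1, rule conjunct2)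
qed

lemma commute:
  assumes x: "x \<in> Ns" and y: "\<Delta> y = tmult mult (tens y one) e"
  shows "mult x y = mult y x"
proof -
  have ax: "\<Delta> x = tmult mult e (tens one x) \<and> \<Delta> x = tmult mult (tens one x) e"
    using x unfolding source_cartan_def by (rule CollectD)
  note Dx = conjunct2[OF ax]
  have eD: "tmult mult e (\<Delta> z) = \<Delta> z" for z using D_mult[of one z] by (simp add: munit)
  have A: "tmult mult e (tmult mult a b) = tmult mult (tmult mult e a) b" for a b
    by (simp add: tmult_assoc[OF m massoc])
  have "\<Delta> (mult x y) = tmult mult (tmult mult (tens one x) e) (\<Delta> y)" by (simp add: D_mult Dx)
  also have "\<dots> = tmult mult (tens one x) (tmult mult e (\<Delta> y))" by (simp add: tmult_assoc[OF m massoc])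
  also have "\<dots> = tmult mult (tmult mult (tens one x) (tens y one)) e" by (simp only: eD) (simp add: y tmult_assoc[OF m massoc])
  also have "\<dots> = tmult mult (tens y x) e" by (simp add: tmult_tens[OF m] munit)
  finally have 1: "\<Delta> (mult x y) = tmult mult (tens y x) e" .
  have "\<Delta> (mult y x) = tmult mult (tmult mult (tens y one) e) (\<Delta> x)" by (simp add: D_mult y)
  also have "\<dots> = tmult mult (tens y one) (tmult mult e (\<Delta> x))" by (simp add: tmult_assoc[OF m massoc])
  also have "\<dots> = tmult mult (tmult mult (tens y one) (tens one x)) e" by (simp only: eD) (simp add: Dx tmult_assoc[OF m massoc])
  also have "\<dots> = tmult mult (tens y x) e" by (simp add: tmult_tens[OF m] munit)
  finally have 2: "\<Delta> (mult y x) = tmult mult (tens y x) e" .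
  from 1 2 have "\<Delta> (mult x y) = \<Delta> (mult y x)" by simp
  thus ?thesis by (rule injD[OF D_inj])
qed

end



locale wkmu = wkac mult star one \<Delta> S \<epsilon> for mult star one \<Delta> S \<epsilon> +
  fixes K :: nat and n :: "nat \<Rightarrow> nat"
    and f :: "nat \<Rightarrow> nat \<Rightarrow> nat \<Rightarrow> ('a \<Rightarrow> complex)"
  assumes npos: "\<forall>\<alpha><K. 0 < n \<alpha>"
    and f_in: "\<forall>\<alpha><K. \<forall>p<n \<alpha>. \<forall>q<n \<alpha>. f \<alpha> p q \<in> source_cartan mult one \<Delta>"
    and f_nz: "\<forall>\<alpha><K. \<forall>p<n \<alpha>. \<forall>q<n \<alpha>. f \<alpha> p q \<noteq> 0"
    and f_mult: "\<forall>\<alpha><K. \<forall>\<beta><K. \<forall>p<n \<alpha>. \<forall>q<n \<alpha>. \<forall>r<n \<beta>. \<forall>s<n \<beta>.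
        mult (f \<alpha> p q) (f \<beta> r s) = (if \<alpha> = \<beta> \<and> q = r then f \<alpha> p s else 0)"
    and f_sum: "(\<Sum>\<alpha><K. \<Sum>p<n \<alpha>. f \<alpha> p p) = one"
    and f_span: "\<forall>x \<in> source_cartan mult one \<Delta>. \<exists>c :: nat \<Rightarrow> nat \<Rightarrow> nat \<Rightarrow> complex.
        x = (\<Sum>\<alpha><K. \<Sum>p<n \<alpha>. \<Sum>q<n \<alpha>. sc (c \<alpha> p q) (f \<alpha> p q))"
begin

definition "I = Sigma {..<K} (\<lambda>\<alpha>. {..<n \<alpha>} \<times> {..<n \<alpha>})"
definition "ff x = f (fst x) (fst (snd x)) (snd (snd x))"
definition "G x = S (ff x)"
definition "i0 x = (SOME i. ff x i \<noteq> 0)"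
definition "phi x v = mult (f (fst x) (fst (snd x)) (fst (snd x))) (mult v (f (fst x) (snd (snd x)) (snd (snd x)))) (i0 x) / ff x (i0 x)"
definition "psi x w = phi x (S w)"

lemma fin_I: "finite I" by (simp add: I_def)
lemma memI: "(a, p, q) \<in> I \<longleftrightarrow> a < K \<and> p < n a \<and> q < n a" by (simp add: I_def)

lemma SIG: "(\<Sum>\<alpha><K. \<Sum>p<n \<alpha>. \<Sum>q<n \<alpha>. g \<alpha> p q) = (\<Sum>x\<in>I. g (fst x) (fst (snd x)) (snd (snd x)))"
proof -
  have "(\<Sum>\<alpha><K. \<Sum>p<n \<alpha>. \<Sum>q<n \<alpha>. g \<alpha> p q) = (\<Sum>\<alpha><K. \<Sum>pq\<in>{..<n \<alpha>} \<times> {..<n \<alpha>}. g \<alpha> (fst pq) (snd pq))"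
    by (simp add: sum.cartesian_product split_beta)
  also have "\<dots> = (\<Sum>x\<in>I. g (fst x) (fst (snd x)) (snd (snd x)))"
    unfolding I_def by (subst sum.Sigma) (auto simp: split_beta)
  finally show ?thesis .
qed

lemma ff_mult: assumes "x \<in> I" "y \<in> I"
  shows "mult (ff x) (ff y) = (if fst x = fst y \<and> snd (snd x) = fst (snd y) then ff (fst x, fst (snd x), snd (snd y)) else 0)"
proof -
  obtain a p q where x: "x = (a, p, q)" by (cases x) auto
  obtain b r s where y: "y = (b, r, s)" by (cases y) auto
  show ?thesis using assms f_mult by (simp add: x y memI ff_def)
qed

lemma ff_Ns: assumes "x \<in> I" shows "ff x \<in> Ns"
proof -
  obtain a p q where x: "x = (a, p, q)" by (cases x) auto
  have a: "a < K" "p < n a" "q < n a" using assms by (auto simp: x memI)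
  show ?thesis using f_in a by (simp add: x ff_def)
qed

lemma ff_nz: assumes "x \<in> I" shows "ff x (i0 x) \<noteq> 0"
proof -
  obtain a p q where x: "x = (a, p, q)" by (cases x) auto
  have a: "a < K" "p < n a" "q < n a" using assms by (auto simp: x memI)
  have nz: "ff x \<noteq> 0" using f_nz a by (simp add: x ff_def)
  have "\<exists>i. ff x i \<noteq> 0"
  proof (rule ccontr)
    assume "\<not> (\<exists>i. ff x i \<noteq> 0)"
    hence "ff x = 0" by (intro ext) simp
    with nz show False by simp
  qed
  then obtain i where "ff x i \<noteq> 0" by blast
  thus ?thesis unfolding i0_def by (rule someI)
qed

lemma phi_lf: "lfunctional (phi x)"
  unfolding lfunctional_def phi_def
  by (simp add: clin_add[OF m2] clin_add[OF m1] clin_sc[OF m2] clin_sc[OF m1] sc_app add_divide_distrib)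

lemma mult0: "mult x 0 = 0" "mult 0 x = 0" by (simp_all add: clin_0[OF m1] clin_0[OF m2])

lemma phi_ff: assumes "x \<in> I" "y \<in> I" shows "phi x (ff y) = (if y = x then 1 else 0)"
proof -
  obtain a p q where x: "x = (a, p, q)" by (cases x) auto
  obtain b r s where y: "y = (b, r, s)" by (cases y) auto
  have a: "a < K" "p < n a" "q < n a" and b: "b < K" "r < n b" "s < n b" using assms by (auto simp: x y memI)
  have nz: "f a p q (i0 x) \<noteq> 0" using ff_nz[OF assms(1)] by (simp add: x ff_def)
  have inner: "mult (f b r s) (f a q q) = (if b = a \<and> s = q then f b r q else 0)"
    using f_mult a b by simp
  show ?thesis
  proof (cases "b = a \<and> s = q")
    case True
    hence "mult (f a p p) (mult (f b r s) (f a q q)) = (if p = r then f a p q else 0)"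
      using inner f_mult a b by (simp add: mult0)
    thus ?thesis using True nz by (auto simp: phi_def x y ff_def)
  next
    case False
    thus ?thesis using inner by (auto simp: phi_def x y mult0 ff_def)
  qed
qed

lemma phi_one: assumes "x \<in> I" shows "phi x one = (if fst (snd x) = snd (snd x) then 1 else 0)"
proof -
  obtain a p q where x: "x = (a, p, q)" by (cases x) auto
  have a: "a < K" "p < n a" "q < n a" using assms by (auto simp: x memI)
  have nz: "f a p q (i0 x) \<noteq> 0" using ff_nz[OF assms(1)] by (simp add: x ff_def)
  have "mult (f a p p) (mult one (f a q q)) = (if p = q then f a p q else 0)"
    using f_mult a by (simp add: munit)
  thus ?thesis using nz by (auto simp: phi_def x ff_def)
qed

lemma phi_sum: assumes "x \<in> I" shows "phi x (\<Sum>y\<in>I. sc (c y) (ff y)) = c x"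
proof -
  have "phi x (\<Sum>y\<in>I. sc (c y) (ff y)) = (\<Sum>y\<in>I. c y * (if y = x then 1 else 0))"
    by (simp add: lf_sum[OF phi_lf] lf_sc[OF phi_lf] phi_ff[OF assms] cong: sum.cong)
  also have "\<dots> = c x" using assms fin_I by simp
  finally show ?thesis .
qed

lemma PROJ: assumes "v \<in> Ns" shows "v = (\<Sum>y\<in>I. sc (phi y v) (ff y))"
proof -
  obtain c where c: "v = (\<Sum>\<alpha><K. \<Sum>p<n \<alpha>. \<Sum>q<n \<alpha>. sc (c \<alpha> p q) (f \<alpha> p q))"
    using f_span assms by blast
  hence v: "v = (\<Sum>y\<in>I. sc (c (fst y) (fst (snd y)) (snd (snd y))) (ff y))"
    by (simp add: SIG ff_def)
  have "phi y v = c (fst y) (fst (snd y)) (snd (snd y))" if "y \<in> I" for y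
    using v phi_sum[OF that] by simp
  hence "(\<Sum>y\<in>I. sc (phi y v) (ff y)) = (\<Sum>y\<in>I. sc (c (fst y) (fst (snd y)) (snd (snd y))) (ff y))"
    by (intro sum.cong) auto
  thus ?thesis using v by simp
qed

lemma G_mult: assumes "x \<in> I" "y \<in> I"
  shows "mult (G x) (G y) = (if fst y = fst x \<and> snd (snd y) = fst (snd x) then G (fst x, fst (snd y), snd (snd x)) else 0)"
proof -
  have "mult (G x) (G y) = S (mult (ff y) (ff x))" by (simp add: G_def S_anti)
  also have "\<dots> = (if fst y = fst x \<and> snd (snd y) = fst (snd x) then G (fst x, fst (snd y), snd (snd x)) else 0)"
    by (auto simp: ff_mult[OF assms(2,1)] G_def clin_0[OF S_lin])
  finally show ?thesis .
qed

lemma psi_G: "psi x (G y) = phi x (ff y)" by (simp add: psi_def G_def SS)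
lemma psi_lf: "lfunctional (psi x)"
  unfolding psi_def[abs_def] lfunctional_def using phi_lf
  by (simp add: lfunctional_def clin_add[OF S_lin] clin_sc[OF S_lin])

lemma PDa: assumes "\<gamma> < K" "u < n \<gamma>"
  shows "(\<Sum>x\<in>I. if fst x = \<gamma> \<and> snd (snd x) = u then h x else 0) = (\<Sum>p<n \<gamma>. h (\<gamma>, p, u))"
proof -
  have "(\<Sum>x\<in>I. if fst x = \<gamma> \<and> snd (snd x) = u then h x else 0) = sum h {x\<in>I. fst x = \<gamma> \<and> snd (snd x) = u}"
    by (simp add: sum.inter_filter[OF fin_I])
  also have "{x\<in>I. fst x = \<gamma> \<and> snd (snd x) = u} = (\<lambda>p. (\<gamma>, p, u)) ` {..<n \<gamma>}"
    using assms by (auto simp: I_def image_iff)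
  also have "sum h \<dots> = (\<Sum>p<n \<gamma>. h (\<gamma>, p, u))"
    by (subst sum.reindex) (auto simp: inj_on_def)
  finally show ?thesis .
qed

end



lemma linsum2: "clin \<Phi> \<Longrightarrow> \<Phi> (\<Sum>x\<in>A. \<Sum>y\<in>B. sc (C x y) (T x y)) = (\<Sum>x\<in>A. \<Sum>y\<in>B. sc (C x y) (\<Phi> (T x y)))"
  by (simp add: clin_sum clin_sc)

context wkmu begin

definition "C x y = (\<Sum>i\<in>UNIV. phi x (bv i) * psi y (row e i))"

lemma rowi: "row e i = (\<Sum>y\<in>I. sc (psi y (row e i)) (G y))"
proof -
  have "S (row e i) = (\<Sum>y\<in>I. sc (phi y (S (row e i))) (ff y))" by (rule PROJ[OF Srow_Ns])
  hence "S (S (row e i)) = S (\<Sum>y\<in>I. sc (phi y (S (row e i))) (ff y))" by simp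
  thus ?thesis by (simp add: SS clin_sum[OF S_lin] clin_sc[OF S_lin] psi_def G_def)
qed

lemma Y_eq: "(\<Sum>j\<in>UNIV. sc (phi x (col e j)) (bv j)) = (\<Sum>y\<in>I. sc (C x y) (G y))"
proof -
  have "(\<Sum>j\<in>UNIV. sc (phi x (col e j)) (bv j)) = (\<Sum>i\<in>UNIV. sc (phi x (bv i)) (row e i))"
  proof (rule ext)
    fix k
    have "phi x (col e k) = phi x (\<Sum>i\<in>UNIV. sc (col e k i) (bv i))" by (subst expand[of "col e k"]) simp
    also have "\<dots> = (\<Sum>i\<in>UNIV. e (i, k) * phi x (bv i))"
      by (simp add: lf_sum[OF phi_lf] lf_sc[OF phi_lf] col_def)
    finally show "(\<Sum>j\<in>UNIV. sc (phi x (col e j)) (bv j)) k = (\<Sum>i\<in>UNIV. sc (phi x (bv i)) (row e i)) k"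
      by (simp add: sum_app sc_app bv_app row_def mult.commute)
  qed
  also have "\<dots> = (\<Sum>i\<in>UNIV. sc (phi x (bv i)) (\<Sum>y\<in>I. sc (psi y (row e i)) (G y)))"
    by (subst rowi) simp
  also have "\<dots> = (\<Sum>i\<in>UNIV. \<Sum>y\<in>I. sc (phi x (bv i) * psi y (row e i)) (G y))"
    by (simp add: sc_sum sc_sc)
  also have "\<dots> = (\<Sum>y\<in>I. \<Sum>i\<in>UNIV. sc (phi x (bv i) * psi y (row e i)) (G y))"
    by (rule sum.swap)
  also have "\<dots> = (\<Sum>y\<in>I. sc (C x y) (G y))"
    by (simp add: sc_sum2 C_def)
  finally show ?thesis .
qed

lemma REP: "e = (\<Sum>x\<in>I. \<Sum>y\<in>I. sc (C x y) (tens (ff x) (G y)))"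
proof -
  have "e = (\<Sum>j\<in>UNIV. tens (col e j) (bv j))" by (rule z_col)
  also have "\<dots> = (\<Sum>j\<in>UNIV. tens (\<Sum>x\<in>I. sc (phi x (col e j)) (ff x)) (bv j))"
    by (subst PROJ[OF col_Ns]) simp
  also have "\<dots> = (\<Sum>j\<in>UNIV. \<Sum>x\<in>I. sc (phi x (col e j)) (tens (ff x) (bv j)))"
    by (simp add: clin_sum[OF clin_tens1] clin_sc[OF clin_tens1])
  also have "\<dots> = (\<Sum>x\<in>I. \<Sum>j\<in>UNIV. sc (phi x (col e j)) (tens (ff x) (bv j)))"
    by (rule sum.swap)
  also have "\<dots> = (\<Sum>x\<in>I. tens (ff x) (\<Sum>j\<in>UNIV. sc (phi x (col e j)) (bv j)))"
    by (simp add: clin_sum[OF clin_tens2] clin_sc[OF clin_tens2])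
  also have "\<dots> = (\<Sum>x\<in>I. tens (ff x) (\<Sum>y\<in>I. sc (C x y) (G y)))"
    by (simp add: Y_eq)
  also have "\<dots> = (\<Sum>x\<in>I. \<Sum>y\<in>I. sc (C x y) (tens (ff x) (G y)))"
    by (simp add: clin_sum[OF clin_tens2] clin_sc[OF clin_tens2])
  finally show ?thesis .
qed

lemma PhiS: "clin (\<lambda>z. tmu mult (tmap S id z))" by (rule clin_comp[OF clin_tmu clin_tmap])

lemma es_one_exp: "one = (\<Sum>x\<in>I. \<Sum>y\<in>I. sc (C x y) (mult (G x) (G y)))"
proof -
  have "one = es one" by (simp add: es_one)
  also have "\<dots> = tmu mult (tmap S id e)" by (simp add: es_def)
  also have "\<dots> = (\<Sum>x\<in>I. \<Sum>y\<in>I. sc (C x y) (tmu mult (tmap S id (tens (ff x) (G y)))))"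
    by (subst REP) (rule linsum2[OF PhiS])
  also have "\<dots> = (\<Sum>x\<in>I. \<Sum>y\<in>I. sc (C x y) (mult (G x) (G y)))"
    by (simp add: tmap_tens[OF S_lin clin_id(2)] tmu_tens[OF m] G_def)
  finally show ?thesis .
qed

lemma memI': "x \<in> I \<longleftrightarrow> fst x < K \<and> fst (snd x) < n (fst x) \<and> snd (snd x) < n (fst x)"
  by (cases x) (simp add: memI)

lemma psi_GG: assumes w: "w \<in> I" and x: "x \<in> I" and y: "y \<in> I"
  shows "psi w (mult (G x) (G y)) = (if fst y = fst x \<and> snd (snd y) = fst (snd x) \<and> (fst x, fst (snd y), snd (snd x)) = w then 1 else 0)"
proof (cases "fst y = fst x \<and> snd (snd y) = fst (snd x)")
  case True
  have z: "(fst x, fst (snd y), snd (snd x)) \<in> I" using True x y by (simp add: memI')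
  show ?thesis using True by (simp add: G_mult[OF x y] psi_G phi_ff[OF w z])
next
  case False
  have 0: "mult (G x) (G y) = 0" by (simp only: G_mult[OF x y] if_not_P[OF False])
  have nc: "\<not> (fst y = fst x \<and> snd (snd y) = fst (snd x) \<and> (fst x, fst (snd y), snd (snd x)) = w)"
    using False by blast
  have "psi w (mult (G x) (G y)) = 0" by (simp add: 0 lf_0[OF psi_lf])
  thus ?thesis by (simp only: if_not_P[OF nc])
qed

lemma K3: assumes g: "\<gamma> < K" "u < n \<gamma>" "v < n \<gamma>"
  shows "(\<Sum>p<n \<gamma>. C (\<gamma>, p, v) (\<gamma>, u, p)) = (if u = v then 1 else 0)"
proof -
  define w where "w = (\<gamma>, u, v)"
  have w: "w \<in> I" using g by (simp add: w_def memI)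
  have inner: "(\<Sum>y\<in>I. C x y * psi w (mult (G x) (G y))) = (if fst x = \<gamma> \<and> snd (snd x) = v then C x (\<gamma>, u, fst (snd x)) else 0)"
    if x: "x \<in> I" for x
  proof -
    define y0 where "y0 = (\<gamma>, u, fst (snd x))"
    have "(\<Sum>y\<in>I. C x y * psi w (mult (G x) (G y))) = (\<Sum>y\<in>I. if y = y0 then (if fst x = \<gamma> \<and> snd (snd x) = v then C x y else 0) else 0)"
    proof (rule sum.cong[OF refl])
      fix y assume y: "y \<in> I"
      have "(fst y = fst x \<and> snd (snd y) = fst (snd x) \<and> (fst x, fst (snd y), snd (snd x)) = w) \<longleftrightarrow>
            (y = y0 \<and> fst x = \<gamma> \<and> snd (snd x) = v)"
        by (cases x; cases y) (auto simp: w_def y0_def)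
      thus "C x y * psi w (mult (G x) (G y)) = (if y = y0 then (if fst x = \<gamma> \<and> snd (snd x) = v then C x y else 0) else 0)"
        by (simp add: psi_GG[OF w x y])
    qed
    also have "\<dots> = (if fst x = \<gamma> \<and> snd (snd x) = v then C x y0 else 0)"
    proof (cases "fst x = \<gamma> \<and> snd (snd x) = v")
      case True
      hence "y0 \<in> I" using x g by (simp add: y0_def memI')
      thus ?thesis by (simp add: fin_I)
    next
      case False
      show ?thesis by (simp only: if_not_P[OF False] if_cancel sum.neutral_const)
    qed
    finally show ?thesis by (simp add: y0_def)
  qed
  have "(if u = v then 1 else 0) = psi w one"
    using phi_one[OF w] by (simp add: psi_def S_one w_def)
  also have "\<dots> = (\<Sum>x\<in>I. \<Sum>y\<in>I. C x y * psi w (mult (G x) (G y)))"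
    by (subst es_one_exp) (simp add: lf_sum[OF psi_lf] lf_sc[OF psi_lf])
  also have "\<dots> = (\<Sum>x\<in>I. if fst x = \<gamma> \<and> snd (snd x) = v then C x (\<gamma>, u, fst (snd x)) else 0)"
    by (rule sum.cong[OF refl]) (rule inner)
  also have "\<dots> = (\<Sum>p<n \<gamma>. C (\<gamma>, p, v) (\<gamma>, u, p))"
    using PDa[OF g(1) g(3), where h="\<lambda>x. C x (\<gamma>, u, fst (snd x))"] by simp
  finally show ?thesis by simp
qed

lemma es_S: assumes x: "x \<in> Ns" shows "es (S x) = x"
proof -
  have DSx: "\<Delta> (S x) = tmult mult (tens (S x) one) e" by (rule transfer1[OF Ns_D(1)[OF x]])
  have P1: "clin (\<lambda>z. tmu mult (tmap S id (tmult mult (tens (S x) one) z)))"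
    by (rule clin_comp[OF PhiS clin_tmult2])
  have el: "tmu mult (tmap S id (tmult mult (tens (S x) one) (tens (ff a) (G b)))) = mult (mult (G a) (G b)) x"
    if a: "a \<in> I" and b: "b \<in> I" for a b
  proof -
    have cm: "mult x (G b) = mult (G b) x"
      unfolding G_def by (rule commute[OF x transfer1[OF Ns_D(1)[OF ff_Ns[OF b]]]])
    have "tmu mult (tmap S id (tmult mult (tens (S x) one) (tens (ff a) (G b)))) = mult (mult (G a) x) (G b)"
      by (simp add: tmult_tens[OF m] munit tmap_tens[OF S_lin clin_id(2)] tmu_tens[OF m] S_anti SS G_def)
    also have "\<dots> = mult (mult (G a) (G b)) x" by (simp add: massoc cm)
    finally show ?thesis .
  qed
  have "es (S x) = tmu mult (tmap S id (tmult mult (tens (S x) one) e))" by (simp add: es_def DSx)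
  also have "\<dots> = (\<Sum>a\<in>I. \<Sum>b\<in>I. sc (C a b) (tmu mult (tmap S id (tmult mult (tens (S x) one) (tens (ff a) (G b))))))"
    by (subst REP) (rule linsum2[OF P1])
  also have "\<dots> = (\<Sum>a\<in>I. \<Sum>b\<in>I. sc (C a b) (mult (mult (G a) (G b)) x))"
    by (intro sum.cong refl) (simp add: el)
  also have "\<dots> = mult (\<Sum>a\<in>I. \<Sum>b\<in>I. sc (C a b) (mult (G a) (G b))) x"
    by (rule linsum2[OF m2, symmetric])
  also have "\<dots> = x" by (simp add: es_one_exp[symmetric] munit)
  finally show ?thesis .
qed

lemma K8: assumes w: "w \<in> I" and x': "x' \<in> I"
  shows "(\<Sum>y\<in>I. C x' y * \<epsilon> (mult (G w) (G y))) = (if x' = w then 1 else 0)"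
proof -
  have P: "clin (\<lambda>z. rslice \<epsilon> (tmult mult (tens one (G w)) z))" by (rule clin_comp[OF clin_rslice clin_tmult2])
  have "ff w = es (S (ff w))" by (simp add: es_S[OF ff_Ns[OF w]])
  also have "\<dots> = rslice \<epsilon> (tmult mult (tens one (G w)) e)" by (simp add: D3 G_def)
  also have "\<dots> = (\<Sum>x\<in>I. \<Sum>y\<in>I. sc (C x y) (rslice \<epsilon> (tmult mult (tens one (G w)) (tens (ff x) (G y)))))"
    by (subst REP) (rule linsum2[OF P])
  also have "\<dots> = (\<Sum>x\<in>I. \<Sum>y\<in>I. sc (C x y * \<epsilon> (mult (G w) (G y))) (ff x))"
    by (simp add: tmult_tens[OF m] munit rslice_tens[OF eps_lf] sc_sc)
  also have "\<dots> = (\<Sum>x\<in>I. sc (\<Sum>y\<in>I. C x y * \<epsilon> (mult (G w) (G y))) (ff x))"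
    by (simp add: sc_sum2)
  finally have "phi x' (ff w) = phi x' (\<Sum>x\<in>I. sc (\<Sum>y\<in>I. C x y * \<epsilon> (mult (G w) (G y))) (ff x))" by simp
  thus ?thesis by (simp add: phi_sum[OF x'] phi_ff[OF x' w] eq_commute)
qed

lemma K8': assumes g: "\<gamma> < K" "u < n \<gamma>" "v < n \<gamma>" and x': "x' \<in> I"
  shows "(\<Sum>r<n \<gamma>. C x' (\<gamma>, r, u) * \<epsilon> (G (\<gamma>, r, v))) = (if x' = (\<gamma>, u, v) then 1 else 0)"
proof -
  define w where "w = (\<gamma>, u, v)"
  have w: "w \<in> I" using g by (simp add: w_def memI)
  have "(\<Sum>y\<in>I. C x' y * \<epsilon> (mult (G w) (G y))) = (\<Sum>y\<in>I. if fst y = \<gamma> \<and> snd (snd y) = u then C x' y * \<epsilon> (G (\<gamma>, fst (snd y), v)) else 0)"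
  proof (rule sum.cong[OF refl])
    fix y assume y: "y \<in> I"
    show "C x' y * \<epsilon> (mult (G w) (G y)) = (if fst y = \<gamma> \<and> snd (snd y) = u then C x' y * \<epsilon> (G (\<gamma>, fst (snd y), v)) else 0)"
    proof (cases "fst y = \<gamma> \<and> snd (snd y) = u")
      case True
      have c: "fst y = fst w \<and> snd (snd y) = fst (snd w)" using True by (simp add: w_def)
      have "mult (G w) (G y) = G (fst w, fst (snd y), snd (snd w))" by (simp only: G_mult[OF w y] if_P[OF c])
      hence "mult (G w) (G y) = G (\<gamma>, fst (snd y), v)" by (simp add: w_def)
      thus ?thesis using True by simp
    next
      case False
      have nc: "\<not> (fst y = fst w \<and> snd (snd y) = fst (snd w))" using False by (simp add: w_def)
      have "mult (G w) (G y) = 0" by (simp only: G_mult[OF w y] if_not_P[OF nc])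
      hence "C x' y * \<epsilon> (mult (G w) (G y)) = 0" by (simp add: lf_0[OF eps_lf])
      thus ?thesis by (simp only: if_not_P[OF False])
    qed
  qed
  also have "\<dots> = (\<Sum>r<n \<gamma>. C x' (\<gamma>, r, u) * \<epsilon> (G (\<gamma>, r, v)))"
    using PDa[OF g(1) g(2), where h="\<lambda>y. C x' y * \<epsilon> (G (\<gamma>, fst (snd y), v))"] by simp
  finally show ?thesis using K8[OF w x'] by (simp add: w_def)
qed

lemma Tval: assumes g: "\<gamma> < K" "q < n \<gamma>" "v < n \<gamma>"
  shows "\<epsilon> (G (\<gamma>, q, v)) = of_nat (n \<gamma>) * (if q = v then 1 else 0)"
proof -
  have "(\<Sum>a<n \<gamma>. \<Sum>r<n \<gamma>. C (\<gamma>, a, q) (\<gamma>, r, a) * \<epsilon> (G (\<gamma>, r, v))) = (\<Sum>a<n \<gamma>. (if (\<gamma>, a, q) = (\<gamma>, a, v) then 1 else 0))"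
    by (rule sum.cong[OF refl], rule K8') (use g in \<open>auto simp: memI\<close>)
  also have "\<dots> = of_nat (n \<gamma>) * (if q = v then 1 else 0)" by simp
  finally have 1: "(\<Sum>a<n \<gamma>. \<Sum>r<n \<gamma>. C (\<gamma>, a, q) (\<gamma>, r, a) * \<epsilon> (G (\<gamma>, r, v))) = of_nat (n \<gamma>) * (if q = v then 1 else 0)" .
  have "(\<Sum>a<n \<gamma>. \<Sum>r<n \<gamma>. C (\<gamma>, a, q) (\<gamma>, r, a) * \<epsilon> (G (\<gamma>, r, v))) = (\<Sum>r<n \<gamma>. (\<Sum>a<n \<gamma>. C (\<gamma>, a, q) (\<gamma>, r, a)) * \<epsilon> (G (\<gamma>, r, v)))"
    by (subst sum.swap) (simp add: sum_distrib_right)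
  also have "\<dots> = (\<Sum>r<n \<gamma>. (if r = q then 1 else 0) * \<epsilon> (G (\<gamma>, r, v)))"
    by (rule sum.cong[OF refl]) (simp add: K3 g)
  also have "\<dots> = \<epsilon> (G (\<gamma>, q, v))" using g by simp
  finally show ?thesis using 1 by simp
qed

lemma Cval: assumes x: "x \<in> I" and g: "\<gamma> < K" "u < n \<gamma>" "v < n \<gamma>"
  shows "C x (\<gamma>, v, u) = (if x = (\<gamma>, u, v) then 1 / of_nat (n \<gamma>) else 0)"
proof -
  have npos': "n \<gamma> > 0" using npos g by simp
  have "(\<Sum>r<n \<gamma>. C x (\<gamma>, r, u) * \<epsilon> (G (\<gamma>, r, v))) = (\<Sum>r<n \<gamma>. if r = v then C x (\<gamma>, r, u) * of_nat (n \<gamma>) else 0)"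
    by (rule sum.cong[OF refl]) (simp add: Tval g)
  also have "\<dots> = C x (\<gamma>, v, u) * of_nat (n \<gamma>)" using g by simp
  finally have "C x (\<gamma>, v, u) * of_nat (n \<gamma>) = (if x = (\<gamma>, u, v) then 1 else 0)"
    using K8'[OF g x] by simp
  thus ?thesis using npos' by (auto simp: field_simps)
qed

lemma main_eq: "e = (\<Sum>\<alpha><K. sc (1 / of_nat (n \<alpha>)) (\<Sum>p<n \<alpha>. \<Sum>q<n \<alpha>. tens (f \<alpha> p q) (S (f \<alpha> q p))))"
proof -
  define \<sigma> where "\<sigma> x = (fst x, snd (snd x), fst (snd x))" for x :: "nat \<times> nat \<times> nat"
  have "e = (\<Sum>x\<in>I. \<Sum>y\<in>I. sc (C x y) (tens (ff x) (G y)))" by (rule REP)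
  also have "\<dots> = (\<Sum>x\<in>I. \<Sum>y\<in>I. if y = \<sigma> x then sc (1 / of_nat (n (fst x))) (tens (ff x) (G y)) else 0)"
  proof (intro sum.cong refl)
    fix x y assume x: "x \<in> I" and y: "y \<in> I"
    obtain \<gamma> v u where yy: "y = (\<gamma>, v, u)" by (cases y) auto
    have g: "\<gamma> < K" "u < n \<gamma>" "v < n \<gamma>" using y by (auto simp: yy memI)
    have "(x = (\<gamma>, u, v)) \<longleftrightarrow> (y = \<sigma> x)" by (cases x) (auto simp: yy \<sigma>_def)
    thus "sc (C x y) (tens (ff x) (G y)) = (if y = \<sigma> x then sc (1 / of_nat (n (fst x))) (tens (ff x) (G y)) else 0)"
      by (auto simp: yy Cval[OF x g])
  qed
  also have "\<dots> = (\<Sum>x\<in>I. sc (1 / of_nat (n (fst x))) (tens (ff x) (G (\<sigma> x))))"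
  proof (rule sum.cong[OF refl])
    fix x assume x: "x \<in> I"
    hence "\<sigma> x \<in> I" by (simp add: memI' \<sigma>_def)
    thus "(\<Sum>y\<in>I. if y = \<sigma> x then sc (1 / of_nat (n (fst x))) (tens (ff x) (G y)) else 0) = sc (1 / of_nat (n (fst x))) (tens (ff x) (G (\<sigma> x)))"
      by (simp add: fin_I)
  qed
  also have "\<dots> = (\<Sum>\<alpha><K. \<Sum>p<n \<alpha>. \<Sum>q<n \<alpha>. sc (1 / of_nat (n \<alpha>)) (tens (f \<alpha> p q) (S (f \<alpha> q p))))"
    by (simp add: SIG \<sigma>_def ff_def G_def)
  also have "\<dots> = (\<Sum>\<alpha><K. sc (1 / of_nat (n \<alpha>)) (\<Sum>p<n \<alpha>. \<Sum>q<n \<alpha>. tens (f \<alpha> p q) (S (f \<alpha> q p))))"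
    by (simp add: sc_sum)
  finally show ?thesis .
qed

end

theorem proposition2p1p11:
  fixes mult :: "('i::finite \<Rightarrow> complex) \<Rightarrow> ('i \<Rightarrow> complex) \<Rightarrow> ('i \<Rightarrow> complex)"
    and star :: "('i \<Rightarrow> complex) \<Rightarrow> ('i \<Rightarrow> complex)"
    and one :: "'i \<Rightarrow> complex"
    and \<Delta> :: "('i \<Rightarrow> complex) \<Rightarrow> ('i \<times> 'i \<Rightarrow> complex)"
    and S :: "('i \<Rightarrow> complex) \<Rightarrow> ('i \<Rightarrow> complex)"
    and \<epsilon> :: "('i \<Rightarrow> complex) \<Rightarrow> complex"
    and K :: nat and n :: "nat \<Rightarrow> nat"
    and f :: "nat \<Rightarrow> nat \<Rightarrow> nat \<Rightarrow> ('i \<Rightarrow> complex)"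
  assumes wka: "weak_kac_algebra mult star one \<Delta> S \<epsilon>"
    and npos: "\<forall>\<alpha><K. 0 < n \<alpha>"
    and f_in: "\<forall>\<alpha><K. \<forall>p<n \<alpha>. \<forall>q<n \<alpha>. f \<alpha> p q \<in> source_cartan mult one \<Delta>"
    and f_nz: "\<forall>\<alpha><K. \<forall>p<n \<alpha>. \<forall>q<n \<alpha>. f \<alpha> p q \<noteq> 0"
    and f_mult: "\<forall>\<alpha><K. \<forall>\<beta><K. \<forall>p<n \<alpha>. \<forall>q<n \<alpha>. \<forall>r<n \<beta>. \<forall>s<n \<beta>.
        mult (f \<alpha> p q) (f \<beta> r s) = (if \<alpha> = \<beta> \<and> q = r then f \<alpha> p s else 0)"
    and f_star: "\<forall>\<alpha><K. \<forall>p<n \<alpha>. \<forall>q<n \<alpha>. star (f \<alpha> p q) = f \<alpha> q p"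
    and f_sum: "(\<Sum>\<alpha><K. \<Sum>p<n \<alpha>. f \<alpha> p p) = one"
    and f_span: "\<forall>x \<in> source_cartan mult one \<Delta>. \<exists>c :: nat \<Rightarrow> nat \<Rightarrow> nat \<Rightarrow> complex.
        x = (\<Sum>\<alpha><K. \<Sum>p<n \<alpha>. \<Sum>q<n \<alpha>. sc (c \<alpha> p q) (f \<alpha> p q))"
  shows "\<Delta> one = (\<Sum>\<alpha><K. sc (1 / of_nat (n \<alpha>))
            (\<Sum>p<n \<alpha>. \<Sum>q<n \<alpha>. tens (f \<alpha> p q) (S (f \<alpha> q p))))"
proof -
  interpret wkmu mult star one \<Delta> S \<epsilon> K n f
    by (rule wkmu.intro[OF wkac.intro[OF wka] wkmu_axioms.intro[OF npos f_in f_nz f_mult f_sum f_span]])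
  show ?thesis by (rule main_eq)
qed

end
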